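(* For every $z\in\mathbb C$ with $\operatorname{Im}z\ne0$, the Hermitian matrix $\dfrac{K(z)-K^*(z)}{z-\bar z}$ is negative semidefinite, where $K^*=\overline{K^T}$; and for every real $x>0$, $K(x)$ is positive semidefinite.
   Context: Let $n\in\{2,3\}$, $Q=(0,1)^n$, $Q_2$ open with $\overline{Q_2}\subset Q$, $Q_1=Q\setminus\overline{Q_2}$, $\Gamma=\partial Q_2$, $\mathbf n$ outward unit normal of $Q_2$, $\chi_m$ characteristic function of $Q_m$. Standing assumptions: $Q_1,Q_2$ have positive measure; the $Q$-periodic extensions of $Q_1,Q_2$ are open with $C^1$ boundary, locally on one side of their boundaries, the periodic extension of $Q_1$ is connected; $Q_1$ connected with Lipschitz boundary. $\mu_1>0$; functions complex-valued; $e(\mathbf u)=\frac12(\nabla\mathbf u+\nabla\mathbf u^T)$, $A:B=\sum A_{ij}B_{ij}$. $\mathcal R(Q_2)$: rigid displacements $\mathbf y\mapsto A\mathbf y+\mathbf b$ ($A$ skew). $H(Q)$ = all $\mathbf v\in H^1(Q_1\cup Q_2)^n$ with $\operatorname{div}\mathbf v=0$, $\mathbf v\cdot\mathbf n=0$ on $\Gamma$, no jump across $\Gamma$, $(\mathbf v,\boldsymbol\eta)_{H^1(Q_2)}=0$ for all $\boldsymbol\eta\in\mathcal R(Q_2)$, $Q$-periodic. For $z\in\mathbb C\setminus(-\infty,0]$ and $j=1,\dots,n$, $\mathbf u^j(\cdot;z)$ is the unique $\mathbf u\in H(Q)$ with $\int_Q2\mu(\mathbf y;z)e(\mathbf u):\overline{e(\mathbf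 v)}d\mathbf y=\int_Q\mathbf e_j\cdot\overline{\mathbf v}d\mathbf y$ for all $\mathbf v\in H(Q)$, where $\mu(\mathbf y;z)=\mu_1\chi_1(\mathbf y)+z\mu_1\chi_2(\mathbf y)$ (weak form of the two-fluid Stokes cell problem with host viscosity $\mu_1$ and inclusion viscosity $z\mu_1$). The self-permeability is the $n\times n$ matrix $K(z)$ with $K_{ij}(z)=\int_Q\mathbf u^j(\mathbf y;z)\cdot\mathbf e_i\,d\mathbf y$. *)

theory Defs
  imports "HOL-Analysis.Analysis"
begin

text \<open>Points of the cell live in real^'n (n = CARD('n), assumed 2 or 3);
  complex vector fields are maps real^'n => complex^'n defined on all of R^n
  (representing their Q-periodic extension).\<close>

definition cellQ :: "(real^'n) set" where
  "cellQ = box 0 One"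

definition cellQ1 :: "(real^'n) set \<Rightarrow> (real^'n) set" where
  "cellQ1 Q2 = cellQ - closure Q2"

definition int_lattice :: "(real^'n) set" where
  "int_lattice = {k. \<forall>i. k $ i \<in> \<int>}"

text \<open>Q-periodic extension of Q2, and of Q1 (the complement of the periodic
  extension of the closure of Q2; this is the open set meant in the paper).\<close>
definition per_ext2 :: "(real^'n) set \<Rightarrow> (real^'n) set" where
  "per_ext2 Q2 = (\<Union>k\<in>int_lattice. (\<lambda>y. y + k) ` Q2)"

definition per_ext1 :: "(real^'n) set \<Rightarrow> (real^'n) set" where
  "per_ext1 Q2 = UNIV - (\<Union>k\<in>int_lattice. (\<lambda>y. y + k) ` closure Q2)"

definition C1_grad :: "(real^'n \<Rightarrow> real) \<Rightarrow> (real^'n \<Rightarrow> real^'n) \<Rightarrow> bool" where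
  "C1_grad \<phi> G \<longleftrightarrow> (\<forall>x. (\<phi> has_derivative (\<lambda>h. G x \<bullet> h)) (at x)) \<and> continuous_on UNIV G"

text \<open>Open set with C^1 boundary lying locally on one side of its boundary:
  near each boundary point it is the subgraph of a C^1 function in a suitable
  orthonormal coordinate system (last axis d).\<close>
definition C1_boundary :: "(real^'n) set \<Rightarrow> bool" where
  "C1_boundary S \<longleftrightarrow> (\<forall>p\<in>frontier S. \<exists>U d g G. open U \<and> p \<in> U \<and> norm d = 1 \<and> C1_grad g G \<and>
      S \<inter> U = {x\<in>U. x \<bullet> d < g (x - (x \<bullet> d) *\<^sub>R d)})"

definition Lipschitz_boundary :: "(real^'n) set \<Rightarrow> bool" where
  "Lipschitz_boundary S \<longleftrightarrow> (\<forall>p\<in>frontier S. \<exists>U d g L. open U \<and> p \<in> U \<and> norm d = 1 \<and>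
      L-lipschitz_on UNIV g \<and>
      S \<inter> U = {x\<in>U. x \<bullet> d < g (x - (x \<bullet> d) *\<^sub>R d)})"

definition L2 :: "(real^'n) set \<Rightarrow> (real^'n \<Rightarrow> complex) \<Rightarrow> bool" where
  "L2 U f \<longleftrightarrow> f \<in> borel_measurable (lebesgue_on U) \<and>
     integrable (lebesgue_on U) (\<lambda>x. (cmod (f x))\<^sup>2)"

definition test_fun :: "(real^'n) set \<Rightarrow> (real^'n \<Rightarrow> real) \<Rightarrow> (real^'n \<Rightarrow> real^'n) \<Rightarrow> bool" where
  "test_fun U \<phi> G \<longleftrightarrow> C1_grad \<phi> G \<and> compact (closure {x. \<phi> x \<noteq> 0}) \<and> closure {x. \<phi> x \<noteq> 0} \<subseteq> U"

definition weak_partial :: "(real^'n) set \<Rightarrow> (real^'n \<Rightarrow> complex) \<Rightarrow> 'n \<Rightarrow> (real^'n \<Rightarrow> complex) \<Rightarrow> bool" where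
  "weak_partial U f i g \<longleftrightarrow> (\<forall>\<phi> G. test_fun U \<phi> G \<longrightarrow>
     (LINT x|lebesgue_on U. f x * complex_of_real (G x $ i)) =
       - (LINT x|lebesgue_on U. g x * complex_of_real (\<phi> x)))"

definition H1 :: "(real^'n) set \<Rightarrow> (real^'n \<Rightarrow> complex) \<Rightarrow> bool" where
  "H1 U f \<longleftrightarrow> L2 U f \<and> (\<forall>i. \<exists>g. L2 U g \<and> weak_partial U f i g)"

text \<open>The weak derivative (determined almost everywhere on U).\<close>
definition wd :: "(real^'n) set \<Rightarrow> (real^'n \<Rightarrow> complex) \<Rightarrow> 'n \<Rightarrow> real^'n \<Rightarrow> complex" where
  "wd U f i = (SOME g. L2 U g \<and> weak_partial U f i g)"

definition H1v :: "(real^'n) set \<Rightarrow> (real^'n \<Rightarrow> complex^'n) \<Rightarrow> bool" where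
  "H1v U v \<longleftrightarrow> (\<forall>k. H1 U (\<lambda>x. v x $ k))"

definition vd :: "(real^'n) set \<Rightarrow> (real^'n \<Rightarrow> complex^'n) \<Rightarrow> 'n \<Rightarrow> 'n \<Rightarrow> real^'n \<Rightarrow> complex" where
  "vd U v k i = wd U (\<lambda>x. v x $ k) i"

definition strain :: "(real^'n) set \<Rightarrow> (real^'n \<Rightarrow> complex^'n) \<Rightarrow> 'n \<Rightarrow> 'n \<Rightarrow> real^'n \<Rightarrow> complex" where
  "strain U v k i x = (vd U v k i x + vd U v i k x) / 2"

definition H1_inner :: "(real^'n) set \<Rightarrow> (real^'n \<Rightarrow> complex^'n) \<Rightarrow> (real^'n \<Rightarrow> complex^'n) \<Rightarrow> complex" where
  "H1_inner U v w = (LINT x|lebesgue_on U.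
      (\<Sum>k\<in>UNIV. v x $ k * cnj (w x $ k)) +
      (\<Sum>k\<in>UNIV. \<Sum>i\<in>UNIV. vd U v k i x * cnj (vd U w k i x)))"

definition rigid_disp :: "(real^'n \<Rightarrow> complex^'n) \<Rightarrow> bool" where
  "rigid_disp \<eta> \<longleftrightarrow> (\<exists>(A::real^'n^'n) b. (\<forall>i j. A $ i $ j = - A $ j $ i) \<and>
      (\<forall>y. \<eta> y = (\<chi> i. complex_of_real ((A *v y + b) $ i))))"

definition Q_periodic :: "(real^'n \<Rightarrow> complex^'n) \<Rightarrow> bool" where
  "Q_periodic v \<longleftrightarrow> (\<forall>y k. v (y + axis k 1) = v y)"

definition Hspace :: "(real^'n) set \<Rightarrow> (real^'n \<Rightarrow> complex^'n) \<Rightarrow> bool" where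
  "Hspace Q2 v \<longleftrightarrow>
     \<comment> \<open>v in H^1(Q1 \<union> Q2)^n\<close>
     H1v (cellQ1 Q2 \<union> Q2) v \<and>
     \<comment> \<open>div v = 0 (in Q1 \<union> Q2)\<close>
     (AE x in lebesgue_on (cellQ1 Q2 \<union> Q2). (\<Sum>i\<in>UNIV. vd (cellQ1 Q2 \<union> Q2) v i i x) = 0) \<and>
     \<comment> \<open>v . n = 0 on Gamma (weak normal trace, Green's formula on Q2)\<close>
     (\<forall>\<phi> G. C1_grad \<phi> G \<longrightarrow>
        (LINT x|lebesgue_on Q2. (\<Sum>i\<in>UNIV. v x $ i * complex_of_real (G x $ i))) = 0) \<and>
     \<comment> \<open>no jump across Gamma\<close>
     H1v cellQ v \<and>
     \<comment> \<open>(v, eta)_{H^1(Q2)} = 0 for rigid eta\<close>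
     (\<forall>\<eta>. rigid_disp \<eta> \<longrightarrow> H1_inner Q2 v \<eta> = 0) \<and>
     \<comment> \<open>Q-periodic: v is periodic and its periodic extension is H^1_loc\<close>
     Q_periodic v \<and> (\<forall>B. bounded B \<and> open B \<longrightarrow> H1v B v)"

definition visc :: "real \<Rightarrow> (real^'n) set \<Rightarrow> complex \<Rightarrow> real^'n \<Rightarrow> complex" where
  "visc \<mu>1 Q2 z y = complex_of_real \<mu>1 * indicator (cellQ1 Q2) y + z * complex_of_real \<mu>1 * indicator Q2 y"

definition cell_form :: "real \<Rightarrow> (real^'n) set \<Rightarrow> complex \<Rightarrow> (real^'n \<Rightarrow> complex^'n) \<Rightarrow> (real^'n \<Rightarrow> complex^'n) \<Rightarrow> complex" where
  "cell_form \<mu>1 Q2 z u v = (LINT y|lebesgue_on cellQ.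
      2 * visc \<mu>1 Q2 z y *
      (\<Sum>k\<in>UNIV. \<Sum>i\<in>UNIV. strain (cellQ1 Q2 \<union> Q2) u k i y * cnj (strain (cellQ1 Q2 \<union> Q2) v k i y)))"

definition cell_sol :: "real \<Rightarrow> (real^'n) set \<Rightarrow> complex \<Rightarrow> 'n \<Rightarrow> (real^'n \<Rightarrow> complex^'n) \<Rightarrow> bool" where
  "cell_sol \<mu>1 Q2 z j u \<longleftrightarrow> Hspace Q2 u \<and>
     (\<forall>v. Hspace Q2 v \<longrightarrow> cell_form \<mu>1 Q2 z u v = (LINT y|lebesgue_on cellQ. cnj (v y $ j)))"

text \<open>u^j(.;z) (unique up to null sets, which do not affect K).\<close>
definition cell_u :: "real \<Rightarrow> (real^'n) set \<Rightarrow> complex \<Rightarrow> 'n \<Rightarrow> real^'n \<Rightarrow> complex^'n" where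
  "cell_u \<mu>1 Q2 z j = (SOME u. cell_sol \<mu>1 Q2 z j u)"

definition Kmat :: "real \<Rightarrow> (real^'n) set \<Rightarrow> complex \<Rightarrow> complex^'n^'n" where
  "Kmat \<mu>1 Q2 z = (\<chi> i j. LINT y|lebesgue_on cellQ. cell_u \<mu>1 Q2 z j y $ i)"

definition adjoint_mat :: "complex^'n^'n \<Rightarrow> complex^'n^'n" where
  "adjoint_mat M = (\<chi> i j. cnj (M $ j $ i))"

definition hermitian_mat :: "complex^'n^'n \<Rightarrow> bool" where
  "hermitian_mat M \<longleftrightarrow> adjoint_mat M = M"

definition quad_form :: "complex^'n^'n \<Rightarrow> complex^'n \<Rightarrow> complex" where
  "quad_form M \<xi> = (\<Sum>i\<in>UNIV. \<Sum>j\<in>UNIV. cnj (\<xi> $ i) * M $ i $ j * \<xi> $ j)"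

definition pos_semidef :: "complex^'n^'n \<Rightarrow> bool" where
  "pos_semidef M \<longleftrightarrow> hermitian_mat M \<and> (\<forall>\<xi>. 0 \<le> Re (quad_form M \<xi>))"

definition neg_semidef :: "complex^'n^'n \<Rightarrow> bool" where
  "neg_semidef M \<longleftrightarrow> hermitian_mat M \<and> (\<forall>\<xi>. Re (quad_form M \<xi>) \<le> 0)"

end

theory Submission
  imports Defs
begin

definition L2l :: "(real^'n \<Rightarrow> complex) \<Rightarrow> bool" where
  "L2l f \<longleftrightarrow> f \<in> borel_measurable lebesgue \<and> integrable lebesgue (\<lambda>x. (cmod (f x))\<^sup>2)"

lemma L2_to_L2l:
  assumes U: "U \<in> sets lebesgue" and L: "L2 U g"
  shows "L2l (\<lambda>x. indicator U x *\<^sub>R g x)"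
proof -
  have m: "(\<lambda>x. indicator U x *\<^sub>R g x) \<in> borel_measurable lebesgue"
    using L U unfolding L2_def by (subst borel_measurable_restrict_space_iff[symmetric]) auto
  have "integrable lebesgue (\<lambda>x. indicator U x *\<^sub>R (cmod (g x))\<^sup>2)"
    using L U unfolding L2_def by (subst integrable_restrict_space[symmetric]) auto
  moreover have "\<And>x. indicator U x *\<^sub>R (cmod (g x))\<^sup>2 = (cmod (indicator U x *\<^sub>R g x))\<^sup>2"
    by (auto simp: indicator_def)
  ultimately show ?thesis using m unfolding L2l_def by simp
qed

lemma L2l_add:
  assumes "L2l f" "L2l g" shows "L2l (\<lambda>x. f x + g x)"
proof -
  have m: "(\<lambda>x. f x + g x) \<in> borel_measurable lebesgue" using assms unfolding L2l_def by auto
  have i: "integrable lebesgue (\<lambda>x. 2 * (cmod (f x))\<^sup>2 + 2 * (cmod (g x))\<^sup>2)"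
    using assms unfolding L2l_def by auto
  have "integrable lebesgue (\<lambda>x. (cmod (f x + g x))\<^sup>2)"
  proof (rule Bochner_Integration.integrable_bound[OF i])
    show "(\<lambda>x. (cmod (f x + g x))\<^sup>2) \<in> borel_measurable lebesgue" using m by measurable
    show "AE x in lebesgue. norm ((cmod (f x + g x))\<^sup>2) \<le> norm (2 * (cmod (f x))\<^sup>2 + 2 * (cmod (g x))\<^sup>2)"
    proof (rule AE_I2)
      fix x
      have "cmod (f x + g x) \<le> cmod (f x) + cmod (g x)" by (rule norm_triangle_ineq)
      hence "(cmod (f x + g x))\<^sup>2 \<le> (cmod (f x) + cmod (g x))\<^sup>2"
        by (simp add: power_mono)
      also have "\<dots> \<le> 2 * (cmod (f x))\<^sup>2 + 2 * (cmod (g x))\<^sup>2"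
      proof -
        have "0 \<le> (cmod (f x) - cmod (g x))\<^sup>2" by simp
        then show ?thesis by (simp add: power2_eq_square algebra_simps)
      qed
      finally show "norm ((cmod (f x + g x))\<^sup>2) \<le> norm (2 * (cmod (f x))\<^sup>2 + 2 * (cmod (g x))\<^sup>2)"
        by simp
    qed
  qed
  then show ?thesis using m unfolding L2l_def by simp
qed

lemma L2l_scale:
  assumes "L2l f" shows "L2l (\<lambda>x. c * f x)"
proof -
  have "integrable lebesgue (\<lambda>x. (cmod c)\<^sup>2 * (cmod (f x))\<^sup>2)"
    using assms unfolding L2l_def by auto
  moreover have "(\<lambda>x. (cmod c)\<^sup>2 * (cmod (f x))\<^sup>2) = (\<lambda>x. (cmod (c * f x))\<^sup>2)"
    by (simp add: norm_mult power_mult_distrib)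
  ultimately show ?thesis using assms unfolding L2l_def by auto
qed

lemma L2l_prod:
  assumes "L2l f" "L2l g" shows "integrable lebesgue (\<lambda>x. f x * g x)"
proof -
  have i: "integrable lebesgue (\<lambda>x. (cmod (f x))\<^sup>2 + (cmod (g x))\<^sup>2)"
    using assms unfolding L2l_def by auto
  show ?thesis
  proof (rule Bochner_Integration.integrable_bound[OF i])
    show "(\<lambda>x. f x * g x) \<in> borel_measurable lebesgue" using assms unfolding L2l_def by auto
    show "AE x in lebesgue. norm (f x * g x) \<le> norm ((cmod (f x))\<^sup>2 + (cmod (g x))\<^sup>2)"
    proof (rule AE_I2)
      fix x
      have "0 \<le> (cmod (f x) - cmod (g x))\<^sup>2" by simp
      hence "cmod (f x) * cmod (g x) \<le> (cmod (f x))\<^sup>2 + (cmod (g x))\<^sup>2"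
      proof -
        have "0 \<le> cmod (f x) * cmod (g x)" by simp
        moreover have "2 * (cmod (f x) * cmod (g x)) \<le> (cmod (f x))\<^sup>2 + (cmod (g x))\<^sup>2"
          using \<open>0 \<le> (cmod (f x) - cmod (g x))\<^sup>2\<close> by (simp add: power2_eq_square algebra_simps)
        ultimately show ?thesis by linarith
      qed
      then show "norm (f x * g x) \<le> norm ((cmod (f x))\<^sup>2 + (cmod (g x))\<^sup>2)"
        by (simp add: norm_mult)
    qed
  qed
qed

lemma L2l_cnj: "L2l f \<Longrightarrow> L2l (\<lambda>x. cnj (f x))"
  unfolding L2l_def
  using measurable_compose[OF _ borel_measurable_continuous_onI[OF continuous_on_cnj[OF continuous_on_id]], of f lebesgue]
  by auto

lemma quad_id:
  fixes x :: "'a::finite \<Rightarrow> complex" and e :: "'a \<Rightarrow> 'b::finite \<Rightarrow> 'b \<Rightarrow> complex"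
  shows "(\<Sum>i\<in>UNIV. \<Sum>j\<in>UNIV. cnj (x i) * (\<Sum>k\<in>UNIV. \<Sum>l\<in>UNIV. e j k l * cnj (e i k l)) * x j)
       = (\<Sum>k\<in>UNIV. \<Sum>l\<in>UNIV. complex_of_real ((cmod (\<Sum>j\<in>UNIV. x j * e j k l))\<^sup>2))"
proof -
  define F where "F i j k l = cnj (x i) * (e j k l * cnj (e i k l)) * x j" for i j k l
  have "(\<Sum>k\<in>UNIV. \<Sum>l\<in>UNIV. complex_of_real ((cmod (\<Sum>j\<in>UNIV. x j * e j k l))\<^sup>2))
      = (\<Sum>k\<in>UNIV. \<Sum>l\<in>UNIV. (\<Sum>j\<in>UNIV. x j * e j k l) * cnj (\<Sum>i\<in>UNIV. x i * e i k l))"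
    by (simp only: complex_norm_square)
  also have "\<dots> = (\<Sum>k\<in>UNIV. \<Sum>l\<in>UNIV. \<Sum>i\<in>UNIV. \<Sum>j\<in>UNIV. F i j k l)"
    by (simp add: F_def sum_distrib_left sum_distrib_right mult_ac)
  also have "\<dots> = (\<Sum>k\<in>UNIV. \<Sum>i\<in>UNIV. \<Sum>l\<in>UNIV. \<Sum>j\<in>UNIV. F i j k l)"
    by (intro sum.cong[OF refl] sum.swap)
  also have "\<dots> = (\<Sum>i\<in>UNIV. \<Sum>k\<in>UNIV. \<Sum>l\<in>UNIV. \<Sum>j\<in>UNIV. F i j k l)"
    by (rule sum.swap)
  also have "\<dots> = (\<Sum>i\<in>UNIV. \<Sum>k\<in>UNIV. \<Sum>j\<in>UNIV. \<Sum>l\<in>UNIV. F i j k l)"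
    by (intro sum.cong[OF refl] sum.swap)
  also have "\<dots> = (\<Sum>i\<in>UNIV. \<Sum>j\<in>UNIV. \<Sum>k\<in>UNIV. \<Sum>l\<in>UNIV. F i j k l)"
    by (intro sum.cong[OF refl] sum.swap)
  also have "\<dots> = (\<Sum>i\<in>UNIV. \<Sum>j\<in>UNIV. cnj (x i) * (\<Sum>k\<in>UNIV. \<Sum>l\<in>UNIV. e j k l * cnj (e i k l)) * x j)"
    by (simp add: F_def sum_distrib_left sum_distrib_right)
  finally show ?thesis ..
qed

lemma open_cellQ: "open (cellQ :: (real^'n) set)"
  unfolding cellQ_def by (rule open_box)

lemma open_cellQ1: "open (cellQ1 Q2)"
  by (simp add: cellQ1_def open_cellQ open_Diff)

lemma open_lebesgue: "open (S :: (real^'n) set) \<Longrightarrow> S \<in> sets lebesgue"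
  by (simp add: borel_open)

lemma key:
  fixes Q2 :: "(real^'n) set" and z :: complex and \<mu>1 :: real
  assumes Q2o: "open Q2" and cl: "closure Q2 \<subseteq> cellQ"
    and sol: "\<And>j. cell_sol \<mu>1 Q2 z j (cell_u \<mu>1 Q2 z j)"
  shows "\<exists>A B. (\<forall>i j. Kmat \<mu>1 Q2 z $ i $ j = 2 * of_real \<mu>1 * (A i j + cnj z * B i j))
     \<and> (\<forall>i j. cnj (A j i) = A i j) \<and> (\<forall>i j. cnj (B j i) = B i j)
     \<and> (\<forall>\<xi>. 0 \<le> Re (\<Sum>i\<in>UNIV. \<Sum>j\<in>UNIV. cnj (\<xi> $ i) * A i j * \<xi> $ j))
     \<and> (\<forall>\<xi>. 0 \<le> Re (\<Sum>i\<in>UNIV. \<Sum>j\<in>UNIV. cnj (\<xi> $ i) * B i j * \<xi> $ j))"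
proof -
  define U where "U = cellQ1 Q2 \<union> Q2"
  define u where "u = cell_u \<mu>1 Q2 z"
  have Uo: "open U" unfolding U_def by (intro open_Un open_cellQ1 Q2o)
  have Ul: "U \<in> sets lebesgue" using Uo by (rule open_lebesgue)
  have Q1l: "cellQ1 Q2 \<in> sets lebesgue" by (rule open_lebesgue[OF open_cellQ1])
  have Q2l: "Q2 \<in> sets lebesgue" by (rule open_lebesgue[OF Q2o])
  have cQl: "cellQ \<in> sets lebesgue" by (rule open_lebesgue[OF open_cellQ])
  have H: "Hspace Q2 (u j)" for j using sol[of j] unfolding cell_sol_def u_def by simp
  have CS: "cell_form \<mu>1 Q2 z (u j) v = (LINT y|lebesgue_on cellQ. cnj (v y $ j))" if "Hspace Q2 v" for j v
    using sol[of j] that unfolding cell_sol_def u_def by simp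
  have vdL2: "L2 U (vd U (u j) k i)" for j k i
  proof -
    have "H1 U (\<lambda>x. u j x $ k)" using H[of j] unfolding Hspace_def H1v_def U_def by simp
    then have "\<exists>g. L2 U g \<and> weak_partial U (\<lambda>x. u j x $ k) i g" unfolding H1_def by simp
    from someI_ex[OF this] show ?thesis unfolding vd_def wd_def by simp
  qed
  define D where "D j k i = (\<lambda>y. indicator U y *\<^sub>R vd U (u j) k i y)" for j k i
  have DL: "L2l (D j k i)" for j k i unfolding D_def by (rule L2_to_L2l[OF Ul vdL2])
  define E where "E j k l = (\<lambda>y. indicator U y *\<^sub>R strain U (u j) k l y)" for j k l
  have E_eq: "E j k l = (\<lambda>y. (1/2) * (D j k l y + D j l k y))" for j k l
    by (auto simp: E_def D_def strain_def indicator_def fun_eq_iff)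
  have EL: "L2l (E j k l)" for j k l
    unfolding E_eq by (intro L2l_scale L2l_add DL)
  define P where "P i j y = (\<Sum>k\<in>UNIV. \<Sum>l\<in>UNIV. E j k l y * cnj (E i k l y))" for i j y
  have Pint: "integrable lebesgue (P i j)" for i j
    unfolding P_def by (intro Bochner_Integration.integrable_sum L2l_prod EL L2l_cnj)
  have PS: "integrable lebesgue (\<lambda>y. indicator S y *\<^sub>R P i j y)" if "S \<in> sets lebesgue" for S i j
    by (rule integrable_mult_indicator[OF that Pint])
  have Pcnj: "cnj (P j i y) = P i j y" for i j y
    by (simp add: P_def mult.commute)
  define A where "A i j = (LINT y|lebesgue. indicator (cellQ1 Q2) y *\<^sub>R P i j y)" for i j
  define B where "B i j = (LINT y|lebesgue. indicator Q2 y *\<^sub>R P i j y)" for i j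
  have Acnj: "cnj (A j i) = A i j" for i j
    unfolding A_def Bochner_Integration.integral_cnj[symmetric] by (simp add: Pcnj)
  have Bcnj: "cnj (B j i) = B i j" for i j
    unfolding B_def Bochner_Integration.integral_cnj[symmetric] by (simp add: Pcnj)
  have CF: "cell_form \<mu>1 Q2 z (u j) (u i) = 2 * of_real \<mu>1 * A i j + 2 * z * of_real \<mu>1 * B i j" for i j
  proof -
    have pw: "indicator cellQ y *\<^sub>R (2 * visc \<mu>1 Q2 z y *
      (\<Sum>k\<in>UNIV. \<Sum>l\<in>UNIV. strain (cellQ1 Q2 \<union> Q2) (u j) k l y * cnj (strain (cellQ1 Q2 \<union> Q2) (u i) k l y)))
      = (2 * of_real \<mu>1) * (indicator (cellQ1 Q2) y *\<^sub>R P i j y) + (2 * z * of_real \<mu>1) * (indicator Q2 y *\<^sub>R P i j y)" for y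
    proof -
      have s1: "y \<in> Q2 \<Longrightarrow> y \<in> cellQ" using cl closure_subset by blast
      have s2: "y \<in> cellQ1 Q2 \<Longrightarrow> y \<in> cellQ \<and> y \<notin> Q2" using closure_subset unfolding cellQ1_def by blast
      show ?thesis
        using s1 s2 unfolding visc_def P_def E_def U_def
        by (cases "y \<in> Q2"; cases "y \<in> cellQ1 Q2"; cases "y \<in> cellQ") (auto simp: indicator_def)
    qed
    have "cell_form \<mu>1 Q2 z (u j) (u i) = (LINT y|lebesgue. (2 * of_real \<mu>1) * (indicator (cellQ1 Q2) y *\<^sub>R P i j y) + (2 * z * of_real \<mu>1) * (indicator Q2 y *\<^sub>R P i j y))"
      unfolding cell_form_def using cQl by (subst integral_restrict_space) (auto simp: pw)
    also have "\<dots> = 2 * of_real \<mu>1 * A i j + 2 * z * of_real \<mu>1 * B i j"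
      unfolding A_def B_def
      by (simp only: Bochner_Integration.integral_add[OF integrable_mult_right[OF PS[OF Q1l]] integrable_mult_right[OF PS[OF Q2l]]]
          integral_mult_right_zero)
    finally show ?thesis .
  qed
  have K: "Kmat \<mu>1 Q2 z $ i $ j = 2 * of_real \<mu>1 * (A i j + cnj z * B i j)" for i j
  proof -
    have "cell_form \<mu>1 Q2 z (u i) (u j) = cnj (Kmat \<mu>1 Q2 z $ i $ j)"
      using CS[OF H[of j], of i] unfolding Kmat_def u_def by simp
    then have "Kmat \<mu>1 Q2 z $ i $ j = cnj (2 * of_real \<mu>1 * A j i + 2 * z * of_real \<mu>1 * B j i)"
      using CF[of i j] by (metis complex_cnj_cnj)
    also have "\<dots> = 2 * of_real \<mu>1 * (A i j + cnj z * B i j)"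
      using Acnj Bcnj by (simp add: algebra_simps)
    finally show ?thesis .
  qed
  have quad: "0 \<le> Re (\<Sum>i\<in>UNIV. \<Sum>j\<in>UNIV. cnj (\<xi> $ i) * (LINT y|lebesgue. indicator S y *\<^sub>R P i j y) * \<xi> $ j)"
    if S: "S \<in> sets lebesgue" for S \<xi>
  proof -
    have "(\<Sum>i\<in>UNIV. \<Sum>j\<in>UNIV. cnj (\<xi> $ i) * (LINT y|lebesgue. indicator S y *\<^sub>R P i j y) * \<xi> $ j)
        = (LINT y|lebesgue. (\<Sum>i\<in>UNIV. \<Sum>j\<in>UNIV. cnj (\<xi> $ i) * (indicator S y *\<^sub>R P i j y) * \<xi> $ j))"
    proof -
      have I1: "integrable lebesgue (\<lambda>y. cnj (\<xi> $ i) * (indicator S y *\<^sub>R P i j y) * \<xi> $ j)" for i j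
        by (intro integrable_mult_left integrable_mult_right PS S)
      have "(LINT y|lebesgue. (\<Sum>i\<in>UNIV. \<Sum>j\<in>UNIV. cnj (\<xi> $ i) * (indicator S y *\<^sub>R P i j y) * \<xi> $ j))
         = (\<Sum>i\<in>UNIV. (LINT y|lebesgue. (\<Sum>j\<in>UNIV. cnj (\<xi> $ i) * (indicator S y *\<^sub>R P i j y) * \<xi> $ j)))"
        by (rule Bochner_Integration.integral_sum) (intro Bochner_Integration.integrable_sum I1)
      also have "\<dots> = (\<Sum>i\<in>UNIV. \<Sum>j\<in>UNIV. (LINT y|lebesgue. cnj (\<xi> $ i) * (indicator S y *\<^sub>R P i j y) * \<xi> $ j))"
        by (intro sum.cong refl Bochner_Integration.integral_sum I1)
      also have "\<dots> = (\<Sum>i\<in>UNIV. \<Sum>j\<in>UNIV. cnj (\<xi> $ i) * (LINT y|lebesgue. indicator S y *\<^sub>R P i j y) * \<xi> $ j)"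
        by (simp only: integral_mult_left_zero integral_mult_right_zero)
      finally show ?thesis by (rule sym)
    qed
    also have "\<dots> = (LINT y|lebesgue. complex_of_real (indicator S y * (\<Sum>k\<in>UNIV. \<Sum>l\<in>UNIV. (cmod (\<Sum>j\<in>UNIV. \<xi> $ j * E j k l y))\<^sup>2)))"
    proof (rule Bochner_Integration.integral_cong[OF refl])
      fix y
      have "(\<Sum>i\<in>UNIV. \<Sum>j\<in>UNIV. cnj (\<xi> $ i) * (indicator S y *\<^sub>R P i j y) * \<xi> $ j)
          = indicator S y *\<^sub>R (\<Sum>i\<in>UNIV. \<Sum>j\<in>UNIV. cnj (\<xi> $ i) * P i j y * \<xi> $ j)"
        by (simp add: scaleR_sum_right)
      also have "(\<Sum>i\<in>UNIV. \<Sum>j\<in>UNIV. cnj (\<xi> $ i) * P i j y * \<xi> $ j)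
          = (\<Sum>k\<in>UNIV. \<Sum>l\<in>UNIV. complex_of_real ((cmod (\<Sum>j\<in>UNIV. \<xi> $ j * E j k l y))\<^sup>2))"
        unfolding P_def by (rule quad_id[where x="\<lambda>i. \<xi> $ i" and e="\<lambda>j k l. E j k l y"])
      finally show "(\<Sum>i\<in>UNIV. \<Sum>j\<in>UNIV. cnj (\<xi> $ i) * (indicator S y *\<^sub>R P i j y) * \<xi> $ j)
          = complex_of_real (indicator S y * (\<Sum>k\<in>UNIV. \<Sum>l\<in>UNIV. (cmod (\<Sum>j\<in>UNIV. \<xi> $ j * E j k l y))\<^sup>2))"
        by (simp add: scaleR_conv_of_real)
    qed
    finally have eq: "(\<Sum>i\<in>UNIV. \<Sum>j\<in>UNIV. cnj (\<xi> $ i) * (LINT y|lebesgue. indicator S y *\<^sub>R P i j y) * \<xi> $ j)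
        = (LINT y|lebesgue. complex_of_real (indicator S y * (\<Sum>k\<in>UNIV. \<Sum>l\<in>UNIV. (cmod (\<Sum>j\<in>UNIV. \<xi> $ j * E j k l y))\<^sup>2)))" .
    show ?thesis unfolding eq integral_complex_of_real Re_complex_of_real
      by (intro Bochner_Integration.integral_nonneg mult_nonneg_nonneg sum_nonneg) auto
  qed
  show ?thesis
    apply (rule exI[of _ A], rule exI[of _ B])
    using K Acnj Bcnj quad[OF Q1l] quad[OF Q2l] unfolding A_def B_def by blast
qed


theorem proposition1:
  fixes Q2 :: "(real^'n) set" and \<mu>1 :: real
  assumes dim: "CARD('n) \<in> {2, 3}"
    and Q2_open: "open Q2"
    and Q2_closure: "closure Q2 \<subseteq> cellQ"
    and Q1_pos: "emeasure lebesgue (cellQ1 Q2) > 0"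
    and Q2_pos: "emeasure lebesgue Q2 > 0"
    and per1_open: "open (per_ext1 Q2)"
    and per2_open: "open (per_ext2 Q2)"
    and per1_C1: "C1_boundary (per_ext1 Q2)"
    and per2_C1: "C1_boundary (per_ext2 Q2)"
    and per1_conn: "connected (per_ext1 Q2)"
    and Q1_conn: "connected (cellQ1 Q2)"
    and Q1_Lip: "Lipschitz_boundary (cellQ1 Q2)"
    and mu1_pos: "\<mu>1 > 0"
    and well_posed: "\<And>z j. z \<notin> complex_of_real ` {..0} \<Longrightarrow> \<exists>u. cell_sol \<mu>1 Q2 z j u"
  shows "(\<forall>z. Im z \<noteq> 0 \<longrightarrow>
            neg_semidef (\<chi> i j. (Kmat \<mu>1 Q2 z $ i $ j - adjoint_mat (Kmat \<mu>1 Q2 z) $ i $ j) / (z - cnj z)))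
       \<and> (\<forall>x::real. x > 0 \<longrightarrow> pos_semidef (Kmat \<mu>1 Q2 (complex_of_real x)))"
proof -
  have wp: "cell_sol \<mu>1 Q2 z j (cell_u \<mu>1 Q2 z j)" if "z \<notin> complex_of_real ` {..0}" for z j
    unfolding cell_u_def by (rule someI_ex[OF well_posed[OF that]])
  show ?thesis
  proof (intro conjI allI impI)
    fix z :: complex assume Iz: "Im z \<noteq> 0"
    have "z \<notin> complex_of_real ` {..0}" using Iz by auto
    then obtain A B where K: "\<And>i j. Kmat \<mu>1 Q2 z $ i $ j = 2 * of_real \<mu>1 * (A i j + cnj z * B i j)"
      and Ac: "\<And>i j. cnj (A j i) = A i j" and Bc: "\<And>i j. cnj (B j i) = B i j"
      and Bq: "\<And>\<xi>. 0 \<le> Re (\<Sum>i\<in>UNIV. \<Sum>j\<in>UNIV. cnj (\<xi> $ i) * B i j * \<xi> $ j)"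
      using key[OF Q2_open Q2_closure wp] by blast
    have zz: "z - cnj z \<noteq> 0" using Iz by (simp add: complex_eq_iff)
    have M: "(Kmat \<mu>1 Q2 z $ i $ j - adjoint_mat (Kmat \<mu>1 Q2 z) $ i $ j) / (z - cnj z) = - 2 * of_real \<mu>1 * B i j" for i j
    proof -
      have "adjoint_mat (Kmat \<mu>1 Q2 z) $ i $ j = 2 * of_real \<mu>1 * (A i j + z * B i j)"
        unfolding adjoint_mat_def using K Ac Bc by simp
      then show ?thesis using K[of i j] zz by (simp add: field_simps)
    qed
    have Meq: "(\<chi> i j. (Kmat \<mu>1 Q2 z $ i $ j - adjoint_mat (Kmat \<mu>1 Q2 z) $ i $ j) / (z - cnj z))
        = (\<chi> i j. - 2 * of_real \<mu>1 * B i j)"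
      by (simp only: M)
    show "neg_semidef (\<chi> i j. (Kmat \<mu>1 Q2 z $ i $ j - adjoint_mat (Kmat \<mu>1 Q2 z) $ i $ j) / (z - cnj z))"
      unfolding Meq neg_semidef_def hermitian_mat_def quad_form_def
    proof (intro conjI allI)
      show "adjoint_mat (\<chi> i j. - 2 * of_real \<mu>1 * B i j) = (\<chi> i j. - 2 * of_real \<mu>1 * B i j)"
        unfolding adjoint_mat_def by (simp add: vec_eq_iff Bc)
    next
      fix \<xi> :: "complex^'n"
      have "(\<Sum>i\<in>UNIV. \<Sum>j\<in>UNIV. cnj (\<xi> $ i) * (\<chi> i j. - 2 * of_real \<mu>1 * B i j) $ i $ j * \<xi> $ j)
        = - 2 * of_real \<mu>1 * (\<Sum>i\<in>UNIV. \<Sum>j\<in>UNIV. cnj (\<xi> $ i) * B i j * \<xi> $ j)"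
        by (simp add: sum_distrib_left mult_ac)
      then show "Re (\<Sum>i\<in>UNIV. \<Sum>j\<in>UNIV. cnj (\<xi> $ i) * (\<chi> i j. - 2 * of_real \<mu>1 * B i j) $ i $ j * \<xi> $ j) \<le> 0"
        using Bq[of \<xi>] mu1_pos by simp
    qed
  next
    fix x :: real assume x: "x > 0"
    have "complex_of_real x \<notin> complex_of_real ` {..0}" using x by auto
    then obtain A B where K: "\<And>i j. Kmat \<mu>1 Q2 (complex_of_real x) $ i $ j = 2 * of_real \<mu>1 * (A i j + cnj (complex_of_real x) * B i j)"
      and Ac: "\<And>i j. cnj (A j i) = A i j" and Bc: "\<And>i j. cnj (B j i) = B i j"
      and Aq: "\<And>\<xi>. 0 \<le> Re (\<Sum>i\<in>UNIV. \<Sum>j\<in>UNIV. cnj (\<xi> $ i) * A i j * \<xi> $ j)"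
      and Bq: "\<And>\<xi>. 0 \<le> Re (\<Sum>i\<in>UNIV. \<Sum>j\<in>UNIV. cnj (\<xi> $ i) * B i j * \<xi> $ j)"
      using key[OF Q2_open Q2_closure wp] by blast
    have K': "Kmat \<mu>1 Q2 (complex_of_real x) $ i $ j = 2 * of_real \<mu>1 * (A i j + of_real x * B i j)" for i j
      using K by simp
    show "pos_semidef (Kmat \<mu>1 Q2 (complex_of_real x))"
      unfolding pos_semidef_def hermitian_mat_def quad_form_def
    proof (intro conjI allI)
      show "adjoint_mat (Kmat \<mu>1 Q2 (complex_of_real x)) = Kmat \<mu>1 Q2 (complex_of_real x)"
        unfolding adjoint_mat_def by (simp add: vec_eq_iff K' Ac Bc)
    next
      fix \<xi> :: "complex^'n"
      have "(\<Sum>i\<in>UNIV. \<Sum>j\<in>UNIV. cnj (\<xi> $ i) * Kmat \<mu>1 Q2 (complex_of_real x) $ i $ j * \<xi> $ j)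
        = 2 * of_real \<mu>1 * (\<Sum>i\<in>UNIV. \<Sum>j\<in>UNIV. cnj (\<xi> $ i) * A i j * \<xi> $ j)
          + 2 * of_real \<mu>1 * of_real x * (\<Sum>i\<in>UNIV. \<Sum>j\<in>UNIV. cnj (\<xi> $ i) * B i j * \<xi> $ j)"
        unfolding K' by (simp add: sum_distrib_left sum.distrib algebra_simps)
      then show "0 \<le> Re (\<Sum>i\<in>UNIV. \<Sum>j\<in>UNIV. cnj (\<xi> $ i) * Kmat \<mu>1 Q2 (complex_of_real x) $ i $ j * \<xi> $ j)"
        using Aq[of \<xi>] Bq[of \<xi>] mu1_pos x by simp
    qed
  qed
qed

end
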